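(* Let $I\subset S=K[x_1,\dots,x_t]$ be an $\mathfrak m$-primary monomial ideal, where $\mathfrak m=\langle x_1,\dots,x_t\rangle$. Let $\mathcal M$ be the set of all $t\times t$ matrices $A=(a_{ij})$ whose rows are the exponent vectors of $t$ elements chosen from $\mathscr G(I)$ and which satisfy: (1) $a_{ii}>a_{li}$ for all $l\ne i$ and all $i=1,\dots,t$; (2) $(a_{11}-1,\dots,a_{tt}-1)\notin E(I)$. Then $$v(I)=\min\{\operatorname{tr}(A)-t : A\in\mathcal M\}.$$
   Context: $K$ is a field and $S$ is standard graded. For a proper graded ideal $I$, the $v$-number is $v(I)=\min\{k\ge 0 : \exists f\in S_k,\ \mathcal P\in\operatorname{Ass}(S/I) \text{ with } (I:f)=\mathcal P\}$. For a monomial ideal $I$, $\mathscr G(I)$ is its unique minimal set of monomial generators, and $E(I)\subseteq\mathbb Z_{\ge0}^t$ is the set of exponent vectors of the monomials lying in $I$ (the monomial $x_1^{a_1}\cdots x_t^{a_t}$ has exponent vector $(a_1,\dots,a_t)$). $\operatorname{tr}$ denotes the trace. *)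

theory Defs
  imports "HOL-Library.Poly_Mapping" "HOL-Library.Function_Algebras"
begin

text \<open>Polynomial ring S = K[x_v : v in 'v] over a field K, where the finite type 'v
  indexes the variables (t = CARD('v)).\<close>

type_synonym ('v, 'k) mpoly = "('v \<Rightarrow> nat) \<Rightarrow>\<^sub>0 'k"

definition monom :: "('v \<Rightarrow> nat) \<Rightarrow> ('v, 'k::comm_ring_1) mpoly" where
  "monom a = Poly_Mapping.single a 1"

definition var :: "'v \<Rightarrow> ('v, 'k::comm_ring_1) mpoly" where
  "var v = monom (\<lambda>w. if w = v then 1 else 0)"

definition tdeg :: "('v::finite \<Rightarrow> nat) \<Rightarrow> nat" where
  "tdeg a = (\<Sum>v\<in>UNIV. a v)"

definition homogeneous :: "nat \<Rightarrow> ('v::finite, 'k::comm_ring_1) mpoly \<Rightarrow> bool" where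
  "homogeneous k f \<longleftrightarrow> (\<forall>a\<in>Poly_Mapping.keys f. tdeg a = k)"

definition is_ideal :: "('a::comm_ring_1) set \<Rightarrow> bool" where
  "is_ideal I \<longleftrightarrow> 0 \<in> I \<and> (\<forall>f\<in>I. \<forall>g\<in>I. f + g \<in> I) \<and> (\<forall>f\<in>I. \<forall>g. g * f \<in> I)"

definition ideal_span :: "('a::comm_ring_1) set \<Rightarrow> 'a set" where
  "ideal_span X = \<Inter>{J. is_ideal J \<and> X \<subseteq> J}"

definition is_prime_ideal :: "('a::comm_ring_1) set \<Rightarrow> bool" where
  "is_prime_ideal P \<longleftrightarrow> is_ideal P \<and> 1 \<notin> P \<and> (\<forall>f g. f * g \<in> P \<longrightarrow> f \<in> P \<or> g \<in> P)"

definition is_primary_ideal :: "('a::comm_ring_1) set \<Rightarrow> bool" where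
  "is_primary_ideal Q \<longleftrightarrow> is_ideal Q \<and> 1 \<notin> Q \<and>
     (\<forall>f g. f * g \<in> Q \<longrightarrow> f \<in> Q \<or> (\<exists>n. g ^ n \<in> Q))"

definition radical :: "('a::comm_ring_1) set \<Rightarrow> 'a set" where
  "radical I = {f. \<exists>n. f ^ n \<in> I}"

definition colon :: "('a::comm_ring_1) set \<Rightarrow> 'a \<Rightarrow> 'a set" where
  "colon I f = {g. g * f \<in> I}"

definition Ass :: "('a::comm_ring_1) set \<Rightarrow> 'a set set" where
  "Ass I = {P. is_prime_ideal P \<and> (\<exists>f. colon I f = P)}"

definition max_ideal :: "('v, 'k::comm_ring_1) mpoly set" where
  "max_ideal = ideal_span (range var)"

definition m_primary :: "('v, 'k::comm_ring_1) mpoly set \<Rightarrow> bool" where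
  "m_primary I \<longleftrightarrow> is_primary_ideal I \<and> radical I = max_ideal"

definition expset :: "('v, 'k::comm_ring_1) mpoly set \<Rightarrow> ('v \<Rightarrow> nat) set" where
  "expset I = {a. monom a \<in> I}"

definition monomial_ideal :: "('v, 'k::comm_ring_1) mpoly set \<Rightarrow> bool" where
  "monomial_ideal I \<longleftrightarrow> is_ideal I \<and> I = ideal_span (monom ` expset I)"

definition mingens :: "('v, 'k::comm_ring_1) mpoly set \<Rightarrow> ('v \<Rightarrow> nat) set" where
  "mingens I = {a \<in> expset I. \<forall>b\<in>expset I. (\<forall>v. b v \<le> a v) \<longrightarrow> b = a}"

definition v_number :: "('v::finite, 'k::comm_ring_1) mpoly set \<Rightarrow> nat" where
  "v_number I = (LEAST k. \<exists>f P. homogeneous k f \<and> P \<in> Ass I \<and> colon I f = P)"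

text \<open>The set M of matrices: a t x t matrix is a map from row index to row; row i
  is the exponent vector A i of an element of G(I), entry a_ij = A i j.\<close>
definition matset :: "('v, 'k::comm_ring_1) mpoly set \<Rightarrow> ('v \<Rightarrow> 'v \<Rightarrow> nat) set" where
  "matset I = {A. (\<forall>i. A i \<in> mingens I)
                 \<and> (\<forall>i l. l \<noteq> i \<longrightarrow> A i i > A l i)
                 \<and> (\<lambda>i. A i i - 1) \<notin> expset I}"

definition trace :: "('v::finite \<Rightarrow> 'v \<Rightarrow> nat) \<Rightarrow> nat" where
  "trace A = (\<Sum>i\<in>UNIV. A i i)"

end

theory Submission
  imports Defs
begin

lemma ideal_span_ideal: "is_ideal (ideal_span X)"
  unfolding ideal_span_def is_ideal_def by auto

lemma ideal_span_sub: "X \<subseteq> ideal_span X"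
  unfolding ideal_span_def by auto

lemma ideal_span_least: "is_ideal J \<Longrightarrow> X \<subseteq> J \<Longrightarrow> ideal_span X \<subseteq> J"
  unfolding ideal_span_def by auto

lemma ideal_sum:
  assumes "is_ideal J" "finite A" "\<And>a. a \<in> A \<Longrightarrow> f a \<in> J" shows "sum f A \<in> J"
  using assms(2,3) by (induction A rule: finite_induct) (use assms(1) in \<open>auto simp: is_ideal_def\<close>)

lemma ideal_mult: "is_ideal J \<Longrightarrow> f \<in> J \<Longrightarrow> g * f \<in> J"
  unfolding is_ideal_def by auto

lemma ideal_mult2: "is_ideal J \<Longrightarrow> f \<in> J \<Longrightarrow> f * g \<in> J"
  unfolding is_ideal_def by (metis mult.commute)

lemma ideal_diff: "is_ideal J \<Longrightarrow> f \<in> J \<Longrightarrow> g \<in> J \<Longrightarrow> f - g \<in> J"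
proof -
  assume J: "is_ideal J" "f \<in> J" "g \<in> J"
  have "(-1) * g \<in> J" using J ideal_mult by blast
  then have "f + (-1) * g \<in> J" using J unfolding is_ideal_def by blast
  then show ?thesis by simp
qed

definition up :: "('v \<Rightarrow> nat) set \<Rightarrow> ('v, 'k::comm_ring_1) mpoly set" where
  "up E = {f. \<forall>a\<in>Poly_Mapping.keys f. \<exists>e\<in>E. e \<le> a}"

lemma le_add_left_fun: "(e::'v \<Rightarrow> nat) \<le> b \<Longrightarrow> e \<le> a + b"
  by (auto simp: le_fun_def intro: trans_le_add2)

lemma up_ideal: "is_ideal (up E :: ('v, 'k::comm_ring_1) mpoly set)"
  unfolding is_ideal_def
proof (intro conjI ballI allI)
  show "0 \<in> (up E :: ('v, 'k) mpoly set)" by (simp add: up_def)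
next
  fix f g :: "('v, 'k) mpoly" assume fg: "f \<in> up E" "g \<in> up E"
  show "f + g \<in> up E" unfolding up_def mem_Collect_eq
  proof (rule ballI)
    fix c assume "c \<in> Poly_Mapping.keys (f + g)"
    then have "c \<in> Poly_Mapping.keys f \<or> c \<in> Poly_Mapping.keys g" using keys_add[of f g] by auto
    then show "\<exists>e\<in>E. e \<le> c" using fg unfolding up_def by blast
  qed
next
  fix f g :: "('v, 'k) mpoly" assume f: "f \<in> up E"
  show "g * f \<in> up E" unfolding up_def mem_Collect_eq
  proof (rule ballI)
    fix c assume "c \<in> Poly_Mapping.keys (g * f)"
    then obtain a b where "c = a + b" "b \<in> Poly_Mapping.keys f" using keys_mult by blast
    with f show "\<exists>e\<in>E. e \<le> c" unfolding up_def using le_add_left_fun by blast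
  qed
qed

lemma poly_sum_singles:
  "f = (\<Sum>a\<in>Poly_Mapping.keys f. Poly_Mapping.single a (Poly_Mapping.lookup f a))"
proof (rule poly_mapping_eqI)
  fix k
  show "Poly_Mapping.lookup f k = Poly_Mapping.lookup (\<Sum>a\<in>Poly_Mapping.keys f. Poly_Mapping.single a (Poly_Mapping.lookup f a)) k"
    by (simp add: lookup_sum lookup_single when_def in_keys_iff)
qed

lemma monom_mult: "monom a * monom b = (monom (a + b) :: ('v, 'k::comm_ring_1) mpoly)"
  by (simp add: monom_def mult_single)

lemma single_monom: "(e::'v \<Rightarrow> nat) \<le> a \<Longrightarrow>
   Poly_Mapping.single a (c::'k::comm_ring_1) = Poly_Mapping.single (a - e) c * monom e"
proof -
  assume "e \<le> a"
  then have "a - e + e = a" by (auto simp: le_fun_def fun_eq_iff)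
  then show ?thesis by (simp add: monom_def mult_single)
qed

lemma span_monoms: "ideal_span (monom ` E) = (up E :: ('v, 'k::comm_ring_1) mpoly set)"
proof
  show "ideal_span (monom ` E) \<subseteq> (up E :: ('v, 'k) mpoly set)"
    by (rule ideal_span_least[OF up_ideal]) (auto simp: up_def monom_def)
next
  show "(up E :: ('v, 'k) mpoly set) \<subseteq> ideal_span (monom ` E)"
  proof
    fix f :: "('v, 'k) mpoly" assume f: "f \<in> up E"
    have "(\<Sum>a\<in>Poly_Mapping.keys f. Poly_Mapping.single a (Poly_Mapping.lookup f a)) \<in> ideal_span (monom ` E)"
    proof (rule ideal_sum[OF ideal_span_ideal])
      fix a assume "a \<in> Poly_Mapping.keys f"
      then obtain e where e: "e \<in> E" "e \<le> a" using f unfolding up_def by blast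
      have "monom e \<in> ideal_span (monom ` E)" using e ideal_span_sub by blast
      then show "Poly_Mapping.single a (Poly_Mapping.lookup f a) \<in> ideal_span (monom ` E)"
        using single_monom[OF e(2)] ideal_mult[OF ideal_span_ideal] by metis
    qed simp
    then show "f \<in> ideal_span (monom ` E)" using poly_sum_singles[of f] by simp
  qed
qed

lemma lookup_monom_mult: "Poly_Mapping.lookup (monom b * g) (b + a) = Poly_Mapping.lookup (g :: ('v, 'k::comm_ring_1) mpoly) a"
  by (simp add: lookup_mult monom_def lookup_single when_mult)

lemma keys_monom_mult: "Poly_Mapping.keys (monom b * g) = (\<lambda>a. b + a) ` Poly_Mapping.keys (g :: ('v, 'k::comm_ring_1) mpoly)"
proof
  show "Poly_Mapping.keys (monom b * g) \<subseteq> (\<lambda>a. b + a) ` Poly_Mapping.keys g"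
    using keys_mult[of "monom b" g] by (auto simp: monom_def)
  show "(\<lambda>a. b + a) ` Poly_Mapping.keys g \<subseteq> Poly_Mapping.keys (monom b * g)"
    using lookup_monom_mult[of b g] by (auto simp: in_keys_iff)
qed


definition pw :: "'v \<Rightarrow> nat \<Rightarrow> ('v \<Rightarrow> nat)" where
  "pw v n = (\<lambda>w. if w = v then n else 0)"

definition socle :: "('v, 'k::comm_ring_1) mpoly set \<Rightarrow> ('v \<Rightarrow> nat) \<Rightarrow> bool" where
  "socle I b \<longleftrightarrow> b \<notin> expset I \<and> (\<forall>v. b + pw v 1 \<in> expset I)"

lemma var_pw: "var v = monom (pw v 1)"
  unfolding var_def pw_def by simp

lemma monom_zero: "monom 0 = (1 :: ('v, 'k::comm_ring_1) mpoly)"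
  by (simp add: monom_def)

lemma var_power: "(var v :: ('v, 'k::comm_ring_1) mpoly) ^ n = monom (pw v n)"
proof (induction n)
  case 0
  have "pw v 0 = 0" by (simp add: pw_def fun_eq_iff)
  then show ?case by (simp only: power_0 monom_zero)
next
  case (Suc n)
  have "pw v 1 + pw v n = pw v (Suc n)" by (simp add: pw_def fun_eq_iff)
  then show ?case using Suc by (simp add: var_pw monom_mult)
qed

lemma I_up: "monomial_ideal I \<Longrightarrow> I = up (expset I)"
  unfolding monomial_ideal_def using span_monoms by metis

lemma I_mem_up: assumes "monomial_ideal I" shows "f \<in> I \<longleftrightarrow> f \<in> up (expset I)"
proof -
  have "I = up (expset I)" by (rule I_up[OF assms])
  then show ?thesis by metis
qed

lemma E_upclosed:
  assumes "monomial_ideal I" "a \<in> expset I" "a \<le> b" shows "b \<in> expset I"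
proof -
  have "monom b \<in> up (expset I)" using assms(2,3) by (auto simp: up_def monom_def)
  then have "monom b \<in> I" using I_mem_up[OF assms(1)] by blast
  then show ?thesis by (simp add: expset_def)
qed

lemma mem_I:
  assumes "monomial_ideal I" shows "f \<in> I \<longleftrightarrow> Poly_Mapping.keys f \<subseteq> expset I"
proof
  assume "f \<in> I"
  then have "f \<in> up (expset I)" using I_mem_up[OF assms] by blast
  then show "Poly_Mapping.keys f \<subseteq> expset I" unfolding up_def using E_upclosed[OF assms] by blast
next
  assume "Poly_Mapping.keys f \<subseteq> expset I"
  then have "f \<in> up (expset I)" unfolding up_def by blast
  then show "f \<in> I" using I_mem_up[OF assms] by blast
qed

lemma ideal_I: "monomial_ideal I \<Longrightarrow> is_ideal I"
  by (simp add: monomial_ideal_def)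

lemma one_notin: "m_primary I \<Longrightarrow> 1 \<notin> I"
  by (simp add: m_primary_def is_primary_ideal_def)

lemma zero_notin_E: "m_primary I \<Longrightarrow> 0 \<notin> expset I"
  using one_notin by (auto simp: expset_def monom_zero)

lemma max_ideal_up: "max_ideal = up (range (\<lambda>v. pw v 1))"
proof -
  have "range var = monom ` range (\<lambda>v. pw v 1)" by (auto simp: var_pw)
  then show ?thesis unfolding max_ideal_def using span_monoms by metis
qed

lemma nonzero_ge_pw: "(a::'v \<Rightarrow> nat) \<noteq> 0 \<Longrightarrow> \<exists>v. pw v 1 \<le> a"
proof -
  assume "a \<noteq> 0"
  then obtain v where "a v \<noteq> 0" by (auto simp: fun_eq_iff)
  then have "pw v 1 \<le> a" by (auto simp: pw_def le_fun_def)
  then show ?thesis by blast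
qed

lemma mem_max: "f \<in> max_ideal \<longleftrightarrow> Poly_Mapping.lookup f 0 = 0"
proof -
  have nz: "\<not> pw v 1 \<le> (0::'v \<Rightarrow> nat)" for v by (auto simp: pw_def le_fun_def)
  have key: "(\<exists>e\<in>range (\<lambda>v. pw v 1). e \<le> a) \<longleftrightarrow> a \<noteq> 0" for a :: "'v \<Rightarrow> nat"
  proof
    assume "\<exists>e\<in>range (\<lambda>v. pw v 1). e \<le> a"
    then obtain v where "pw v 1 \<le> a" by blast
    then show "a \<noteq> 0" using nz[of v] by metis
  next
    assume "a \<noteq> 0"
    then obtain v where "pw v 1 \<le> a" using nonzero_ge_pw by blast
    then show "\<exists>e\<in>range (\<lambda>v. pw v 1). e \<le> a" by blast
  qed
  have "f \<in> max_ideal \<longleftrightarrow> (\<forall>a\<in>Poly_Mapping.keys f. a \<noteq> 0)"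
    unfolding max_ideal_up up_def mem_Collect_eq by (simp only: key)
  also have "\<dots> \<longleftrightarrow> Poly_Mapping.lookup f 0 = 0" by (auto simp: in_keys_iff)
  finally show ?thesis .
qed

lemma zero_eq_add_fun: "((0::'v \<Rightarrow> nat) = l + q) \<longleftrightarrow> l = 0 \<and> q = 0"
  by (auto simp: fun_eq_iff)

lemma lookup_mult_zero: "Poly_Mapping.lookup (f * g) 0 = Poly_Mapping.lookup f (0::'v \<Rightarrow> nat) * Poly_Mapping.lookup (g :: ('v, 'k::comm_ring_1) mpoly) 0"
proof -
  have "Poly_Mapping.lookup (f * g) 0 = (\<Sum>l. Poly_Mapping.lookup f l * (\<Sum>q. Poly_Mapping.lookup g q when l = 0 \<and> q = 0))"
    by (simp add: lookup_mult zero_eq_add_fun)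
  also have "\<dots> = (\<Sum>l. Poly_Mapping.lookup f l * (Poly_Mapping.lookup g 0 when l = 0))"
  proof -
    have inner: "(\<Sum>q. Poly_Mapping.lookup g q when l = 0 \<and> q = 0) = (Poly_Mapping.lookup g 0 when l = 0)" for l
      by (cases "l = 0") simp_all
    show ?thesis by (simp only: inner)
  qed
  also have "\<dots> = Poly_Mapping.lookup f 0 * Poly_Mapping.lookup g 0"
    by (simp add: mult_when)
  finally show ?thesis .
qed

lemma max_prime: "is_prime_ideal (max_ideal :: ('v, 'k::field) mpoly set)"
proof -
  have "is_ideal (max_ideal :: ('v, 'k) mpoly set)" unfolding max_ideal_up by (rule up_ideal)
  then show ?thesis unfolding is_prime_ideal_def by (auto simp: mem_max lookup_mult_zero)
qed

lemma prime_power: "is_prime_ideal P \<Longrightarrow> x ^ n \<in> P \<Longrightarrow> x \<in> P"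
  by (induction n) (auto simp: is_prime_ideal_def)

lemma pure_powers:
  assumes "monomial_ideal I" "m_primary I" shows "\<exists>n. pw v n \<in> expset I"
proof -
  have "var v \<in> max_ideal" unfolding max_ideal_def using ideal_span_sub by blast
  then have "var v \<in> radical I" using assms(2) by (simp add: m_primary_def)
  then obtain n where "var v ^ n \<in> I" by (auto simp: radical_def)
  then show ?thesis by (auto simp: var_power expset_def)
qed

lemma colon_socle:
  assumes "monomial_ideal I" "socle I b" shows "colon I (monom b) = max_ideal"
proof -
  have key: "b + a \<in> expset I \<longleftrightarrow> a \<noteq> 0" for a
  proof
    assume "b + a \<in> expset I" then show "a \<noteq> 0" using assms(2) by (auto simp: socle_def)
  next
    assume "a \<noteq> 0"
    then obtain v where "pw v 1 \<le> a" using nonzero_ge_pw by blast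
    then have h: "b + pw v 1 \<le> b + a" by (auto simp: le_fun_def)
    have "b + pw v 1 \<in> expset I" using assms(2) by (simp add: socle_def)
    then show "b + a \<in> expset I" using E_upclosed[OF assms(1) _ h] by blast
  qed
  have "g \<in> colon I (monom b) \<longleftrightarrow> g \<in> max_ideal" for g :: "('a, 'b) mpoly"
  proof -
    have "g \<in> colon I (monom b) \<longleftrightarrow> monom b * g \<in> I" by (simp add: colon_def mult.commute)
    also have "\<dots> \<longleftrightarrow> (\<forall>a\<in>Poly_Mapping.keys g. b + a \<in> expset I)"
      using mem_I[OF assms(1)] keys_monom_mult by (metis image_subset_iff)
    also have "\<dots> \<longleftrightarrow> 0 \<notin> Poly_Mapping.keys g" using key by blast
    also have "\<dots> \<longleftrightarrow> g \<in> max_ideal" by (simp add: mem_max in_keys_iff)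
    finally show ?thesis .
  qed
  then show ?thesis by blast
qed

lemma socle_witness:
  fixes I :: "('v::finite, 'k::field) mpoly set"
  assumes "monomial_ideal I" "socle I b"
  shows "\<exists>f P. homogeneous (tdeg b) f \<and> P \<in> Ass I \<and> colon I f = P"
proof (intro exI conjI)
  show "homogeneous (tdeg b) (monom b :: ('v, 'k) mpoly)" by (simp add: homogeneous_def monom_def)
  show "colon I (monom b) = max_ideal" using colon_socle[OF assms] .
  then show "max_ideal \<in> Ass I" using max_prime by (auto simp: Ass_def)
qed

lemma vnum_le: "monomial_ideal (I :: ('v::finite, 'k::field) mpoly set) \<Longrightarrow> socle I b \<Longrightarrow> v_number I \<le> tdeg b"
  unfolding v_number_def by (rule Least_le) (rule socle_witness)

lemma witness_socle:
  assumes "monomial_ideal I" "m_primary I" "homogeneous k f" "P \<in> Ass I" "colon I f = P"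
  shows "\<exists>b. socle I b \<and> tdeg b = k"
proof -
  have prime: "is_prime_ideal P" using assms(4) by (simp add: Ass_def)
  then have "1 \<notin> P" by (simp add: is_prime_ideal_def)
  then have fI: "f \<notin> I" using assms(5) by (auto simp: colon_def)
  have vP: "var v * f \<in> I" for v
  proof -
    obtain n where "pw v n \<in> expset I" using pure_powers[OF assms(1,2)] by blast
    then have "var v ^ n \<in> I" by (simp add: var_power expset_def)
    then have "var v ^ n * f \<in> I" using ideal_mult2[OF ideal_I[OF assms(1)]] by blast
    then have "var v ^ n \<in> P" using assms(5) unfolding colon_def by blast
    then have "var v \<in> P" using prime prime_power by blast
    then show ?thesis using assms(5) unfolding colon_def by blast
  qed
  have "\<not> Poly_Mapping.keys f \<subseteq> expset I" using fI mem_I[OF assms(1)] by simp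
  then obtain a where a: "a \<in> Poly_Mapping.keys f" "a \<notin> expset I" by blast
  have "pw v 1 + a \<in> expset I" for v
  proof -
    have "Poly_Mapping.keys (monom (pw v 1) * f) \<subseteq> expset I" using vP[of v] mem_I[OF assms(1)] var_pw[of v] by metis
    then show ?thesis using a(1) keys_monom_mult[of "pw v 1" f] by blast
  qed
  then have "socle I a" using a(2) by (simp add: socle_def add.commute)
  moreover have "tdeg a = k" using assms(3) a(1) by (simp add: homogeneous_def)
  ultimately show ?thesis by blast
qed


lemma tdeg_add_pw: "tdeg (b + pw v 1) = tdeg (b::'v::finite \<Rightarrow> nat) + 1"
proof -
  have "tdeg (b + pw v 1) = (\<Sum>w\<in>UNIV. b w) + (\<Sum>w\<in>UNIV. pw v 1 w)"
    by (simp add: tdeg_def sum.distrib)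
  also have "(\<Sum>w\<in>UNIV. pw v 1 w) = 1" by (simp add: pw_def)
  finally show ?thesis by (simp add: tdeg_def)
qed

lemma tdeg_mono_strict:
  assumes "(c::'v::finite \<Rightarrow> nat) \<le> g" "c \<noteq> g" shows "tdeg c < tdeg g"
proof -
  have "\<forall>x\<in>UNIV. c x \<le> g x" using assms(1) by (simp add: le_fun_def)
  moreover obtain x where "c x \<noteq> g x" using assms(2) by (auto simp: fun_eq_iff)
  then have "\<exists>x\<in>UNIV. c x < g x" using assms(1) by (metis UNIV_I le_fun_def order_le_neq_trans)
  ultimately show ?thesis unfolding tdeg_def by (intro sum_strict_mono_ex1) auto
qed

lemma tdeg_mono: "(c::'v::finite \<Rightarrow> nat) \<le> g \<Longrightarrow> tdeg c \<le> tdeg g"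
  unfolding tdeg_def by (intro sum_mono) (simp add: le_fun_def)

lemma min_gen:
  fixes I :: "('v::finite, 'k::comm_ring_1) mpoly set"
  assumes "monomial_ideal I" "a \<in> expset I" shows "\<exists>g\<in>mingens I. g \<le> a"
proof -
  obtain g where g: "g \<in> expset I \<and> g \<le> a" "\<forall>y. y \<in> expset I \<and> y \<le> a \<longrightarrow> tdeg g \<le> tdeg y"
    using ex_has_least_nat[of "\<lambda>g. g \<in> expset I \<and> g \<le> a" a tdeg] assms(2) by blast
  have "g \<in> mingens I" unfolding mingens_def
  proof (intro CollectI conjI ballI impI)
    show "g \<in> expset I" using g(1) by blast
    fix c assume c: "c \<in> expset I" "\<forall>v. c v \<le> g v"
    then have "c \<le> g" by (simp add: le_fun_def)
    then have "c \<le> a" using g(1) by (meson order_trans)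
    then have "tdeg g \<le> tdeg c" using g(2) c(1) by blast
    then show "c = g" using tdeg_mono_strict[OF \<open>c \<le> g\<close>] by fastforce
  qed
  then show ?thesis using g(1) by blast
qed

lemma mingens_E: "g \<in> mingens I \<Longrightarrow> g \<in> expset I"
  by (simp add: mingens_def)

lemma socle_matrix:
  fixes I :: "('v::finite, 'k::comm_ring_1) mpoly set"
  assumes "monomial_ideal I" "socle I b"
  shows "\<exists>A\<in>matset I. trace A = tdeg b + card (UNIV :: 'v set)"
proof -
  have "\<forall>v. \<exists>g. g \<in> mingens I \<and> g \<le> b + pw v 1"
    using min_gen[OF assms(1)] assms(2) unfolding socle_def by blast
  then obtain A where A: "\<And>v. A v \<in> mingens I" "\<And>v. A v \<le> b + pw v 1" by metis
  have off: "A v l \<le> b l" if "l \<noteq> v" for v l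
    using le_funD[OF A(2)[of v], of l] that by (simp add: pw_def)
  have diag: "A v v = b v + 1" for v
  proof (rule ccontr)
    assume "A v v \<noteq> b v + 1"
    then have "A v v \<le> b v" using le_funD[OF A(2)[of v], of v] by (simp add: pw_def)
    then have "A v \<le> b" using off[where v=v] unfolding le_fun_def by metis
    then have "b \<in> expset I" using E_upclosed[OF assms(1) mingens_E[OF A(1)]] by blast
    then show False using assms(2) by (simp add: socle_def)
  qed
  have "A \<in> matset I" unfolding matset_def
  proof (intro CollectI conjI allI impI)
    show "A i \<in> mingens I" for i by (rule A(1))
    show "A l i < A i i" if "l \<noteq> i" for i l using off[where v=l and l=i] diag[of i] that by simp
    have "(\<lambda>i. A i i - 1) = b" using diag by (simp add: fun_eq_iff)
    then show "(\<lambda>i. A i i - 1) \<notin> expset I" using assms(2) by (simp add: socle_def)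
  qed
  moreover have "trace A = tdeg b + card (UNIV :: 'v set)"
    by (simp add: trace_def tdeg_def diag sum_Suc)
  ultimately show ?thesis by blast
qed

lemma matrix_socle:
  fixes I :: "('v::finite, 'k::comm_ring_1) mpoly set"
  assumes "monomial_ideal I" "A \<in> matset I"
  shows "socle I (\<lambda>i. A i i - 1) \<and> int (trace A) - int (card (UNIV :: 'v set)) = int (tdeg (\<lambda>i. A i i - 1))"
proof -
  define b where "b = (\<lambda>i. A i i - 1)"
  have mg: "A i \<in> mingens I" for i using assms(2) by (simp add: matset_def)
  have bE: "b \<notin> expset I" using assms(2) by (simp add: matset_def b_def)
  have off: "A i l \<le> b l" if "l \<noteq> i" for i l
  proof -
    have "A i l < A l l" using assms(2) that by (simp add: matset_def)
    then show ?thesis by (simp add: b_def)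
  qed
  have pos: "A i i \<ge> 1" for i
  proof (rule ccontr)
    assume "\<not> A i i \<ge> 1"
    then have "A i \<le> b" using off[where i=i] unfolding le_fun_def by (metis less_one not_le zero_le)
    then show False using E_upclosed[OF assms(1) mingens_E[OF mg]] bE by blast
  qed
  have "A v \<le> b + pw v 1" for v
    using off[where i=v] pos[of v] by (auto simp: le_fun_def pw_def b_def)
  then have "b + pw v 1 \<in> expset I" for v using E_upclosed[OF assms(1) mingens_E[OF mg]] by blast
  then have "socle I b" using bE by (simp add: socle_def)
  moreover have "trace A = tdeg b + card (UNIV :: 'v set)"
  proof -
    have d: "A i i = b i + 1" for i using pos[of i] by (simp add: b_def)
    have "trace A = (\<Sum>i\<in>UNIV. b i + 1)" unfolding trace_def by (simp only: d)
    then show ?thesis by (simp add: tdeg_def sum_Suc)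
  qed
  ultimately show ?thesis by (simp add: b_def)
qed

lemma notin_bound:
  fixes I :: "('v::finite, 'k::comm_ring_1) mpoly set"
  assumes "monomial_ideal I" "m_primary I"
  shows "\<exists>N. \<forall>b. b \<notin> expset I \<longrightarrow> tdeg b \<le> N"
proof -
  have "\<forall>v. \<exists>n. pw v n \<in> expset I" using pure_powers[OF assms] by blast
  then obtain n where n: "\<And>v. pw v (n v) \<in> expset I" by metis
  have "tdeg b \<le> (\<Sum>v\<in>UNIV. n v)" if "b \<notin> expset I" for b
  proof -
    have "b v \<le> n v" for v
    proof (rule ccontr)
      assume "\<not> b v \<le> n v"
      then have "pw v (n v) \<le> b" by (auto simp: le_fun_def pw_def)
      then show False using E_upclosed[OF assms(1) n[of v]] that by blast
    qed
    then show ?thesis unfolding tdeg_def by (intro sum_mono) auto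
  qed
  then show ?thesis by blast
qed

lemma socle_exists:
  fixes I :: "('v::finite, 'k::comm_ring_1) mpoly set"
  assumes "monomial_ideal I" "m_primary I"
  shows "\<exists>b. socle I b"
proof -
  obtain N where N: "\<forall>b. b \<notin> expset I \<longrightarrow> tdeg b \<le> N" using notin_bound[OF assms] by blast
  have "\<forall>y. y \<notin> expset I \<longrightarrow> tdeg y < Suc N" using N by (simp add: less_Suc_eq_le)
  then obtain b where b: "b \<notin> expset I" "\<forall>y. y \<notin> expset I \<longrightarrow> tdeg y \<le> tdeg b"
    using Lattices_Big.ex_has_greatest_nat[of "\<lambda>b. b \<notin> expset I" 0 tdeg "Suc N"] zero_notin_E[OF assms(2)]
    by blast
  have "b + pw v 1 \<in> expset I" for v
  proof (rule ccontr)
    assume "b + pw v 1 \<notin> expset I"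
    then have "tdeg (b + pw v 1) \<le> tdeg b" using b(2) by blast
    then show False using tdeg_add_pw[of b v] by linarith
  qed
  then show ?thesis using b(1) by (auto simp: socle_def)
qed

theorem theorem4p1:
  fixes I :: "('v::finite, 'k::field) mpoly set"
  assumes "monomial_ideal I"
    and "m_primary I"
  shows "int (v_number I) = Min {int (trace A) - int (card (UNIV :: 'v set)) | A. A \<in> matset I}"
proof -
  let ?S = "{int (trace A) - int (card (UNIV :: 'v set)) | A. A \<in> matset I}"
  obtain b0 where b0: "socle I b0" using socle_exists[OF assms] by blast
  have ex: "\<exists>f P. homogeneous (v_number I) f \<and> P \<in> Ass I \<and> colon I f = P"
    unfolding v_number_def by (rule LeastI_ex) (use socle_witness[OF assms(1) b0] in blast)
  then obtain f P where fP: "homogeneous (v_number I) f" "P \<in> Ass I" "colon I f = P" by blast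
  obtain b where b: "socle I b" "tdeg b = v_number I" using witness_socle[OF assms fP] by blast
  obtain A where A: "A \<in> matset I" "trace A = tdeg b + card (UNIV :: 'v set)"
    using socle_matrix[OF assms(1) b(1)] by blast
  have mem: "int (v_number I) \<in> ?S"
    using A b(2) by force
  have low: "int (v_number I) \<le> x" if xS: "x \<in> ?S" for x
  proof -
    obtain A' where A': "A' \<in> matset I" "x = int (trace A') - int (card (UNIV :: 'v set))" using xS by blast
    have "socle I (\<lambda>i. A' i i - 1)" "x = int (tdeg (\<lambda>i. A' i i - 1))"
      using matrix_socle[OF assms(1) A'(1)] A'(2) by auto
    then show ?thesis using vnum_le[OF assms(1)] by simp
  qed
  obtain N where N: "\<forall>b. b \<notin> expset I \<longrightarrow> tdeg b \<le> N" using notin_bound[OF assms] by blast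
  have "?S \<subseteq> {0..int N}"
  proof
    fix x assume "x \<in> ?S"
    then obtain A' where A': "A' \<in> matset I" "x = int (trace A') - int (card (UNIV :: 'v set))" by blast
    have "socle I (\<lambda>i. A' i i - 1)" "x = int (tdeg (\<lambda>i. A' i i - 1))"
      using matrix_socle[OF assms(1) A'(1)] A'(2) by auto
    then show "x \<in> {0..int N}" using N by (auto simp: socle_def)
  qed
  then have fin: "finite ?S" using finite_subset by blast
  show ?thesis using Min_eqI[OF fin low mem] by simp
qed

end
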